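(* Let $G$ and $N$ be finite groups of the same order, let $\mathfrak{f}:G\to\mathrm{Aut}(N)$ be a homomorphism and let $\mathfrak{g}:G\to N$ be a bijective map such that $\mathfrak{g}(\sigma\tau)=\mathfrak{g}(\sigma)\cdot\mathfrak{f}(\sigma)(\mathfrak{g}(\tau))$ for all $\sigma,\tau\in G$. Let $M$ be any characteristic subgroup of $N$, and let $\theta_M:\mathrm{Aut}(N)\to\mathrm{Aut}(N/M)$, $\theta_M(\varphi)(\eta M)=\varphi(\eta)M$, be the natural homomorphism. Define $H=\mathfrak{g}^{-1}(M)$. Then $H$ is a subgroup of $G$ and $\mathcal{E}'(H,M)$ is non-empty. Moreover, if $N/M$ is solvable and $\ker(\theta_M\circ\mathfrak{f})$ is insolvable, then $H$ is insolvable.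
   Context: For a finite group $M$, let $\mathrm{Perm}(M)$ be the group of all permutations of the set $M$. A subgroup $\mathcal{G}\le \mathrm{Perm}(M)$ is regular if the map $\mathcal{G}\to M$, $\sigma\mapsto\sigma(1_M)$, is bijective. Let $\rho:M\to\mathrm{Perm}(M)$, $\rho(\eta)(x)=x\eta^{-1}$. The holomorph of $M$ is $\mathrm{Hol}(M)=\rho(M)\rtimes\mathrm{Aut}(M)\le\mathrm{Perm}(M)$. For a group $H$ with $|H|=|M|$, $\mathcal{E}'(H,M)$ denotes the set of regular subgroups of $\mathrm{Hol}(M)$ isomorphic to $H$. *)

theory Defs
  imports "HOL-Algebra.Algebra"
begin

definition characteristic :: "'a set \<Rightarrow> ('a, 'b) monoid_scheme \<Rightarrow> bool" where
  "characteristic M N \<longleftrightarrow> subgroup M N \<and> (\<forall>\<phi> \<in> auto N. \<phi> ` M = M)"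

definition theta :: "('a, 'b) monoid_scheme \<Rightarrow> 'a set \<Rightarrow> ('a \<Rightarrow> 'a) \<Rightarrow> ('a set \<Rightarrow> 'a set)" where
  "theta N M \<phi> = (\<lambda>C \<in> carrier (N Mod M). \<Union>\<eta>\<in>C. \<phi> \<eta> <#\<^bsub>N\<^esub> M)"

definition rho :: "('a, 'b) monoid_scheme \<Rightarrow> 'a \<Rightarrow> ('a \<Rightarrow> 'a)" where
  "rho M \<eta> = (\<lambda>x \<in> carrier M. x \<otimes>\<^bsub>M\<^esub> inv\<^bsub>M\<^esub> \<eta>)"

definition Hol :: "('a, 'b) monoid_scheme \<Rightarrow> ('a \<Rightarrow> 'a) set" where
  "Hol M = {compose (carrier M) (rho M \<eta>) \<alpha> | \<eta> \<alpha>. \<eta> \<in> carrier M \<and> \<alpha> \<in> auto M}"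

definition HolGroup :: "('a, 'b) monoid_scheme \<Rightarrow> ('a \<Rightarrow> 'a) monoid" where
  "HolGroup M = BijGroup (carrier M) \<lparr>carrier := Hol M\<rparr>"

text \<open>E'(H, M): regular subgroups of Hol(M) isomorphic to H.\<close>
definition E' :: "('c, 'd) monoid_scheme \<Rightarrow> ('a, 'b) monoid_scheme \<Rightarrow> ('a \<Rightarrow> 'a) set set" where
  "E' H M = {R. subgroup R (HolGroup M)
              \<and> bij_betw (\<lambda>\<sigma>. \<sigma> \<one>\<^bsub>M\<^esub>) R (carrier M)
              \<and> (BijGroup (carrier M)) \<lparr>carrier := R\<rparr> \<cong> H}"

end

theory Submission
  imports Defs
begin


lemma fin_inj_bij: "finite A \<Longrightarrow> f \<in> A \<rightarrow> A \<Longrightarrow> inj_on f A \<Longrightarrow> bij_betw f A A"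
  unfolding bij_betw_def using endo_inj_surj[of A f] by auto

lemma subgroup_in_sup:
  assumes "group K" "subgroup R K" "R \<subseteq> S" "S \<subseteq> carrier K"
  shows "subgroup R (K\<lparr>carrier := S\<rparr>)"
proof -
  interpret K: group K by fact
  have inv: "inv\<^bsub>K\<lparr>carrier := S\<rparr>\<^esub> x = inv\<^bsub>K\<^esub> x" if "x \<in> R" for x
  proof -
    have xc: "x \<in> carrier K" by (rule subgroup.mem_carrier[OF assms(2) that])
    have ic: "inv\<^bsub>K\<^esub> x \<in> R" by (rule subgroup.m_inv_closed[OF assms(2) that])
    have e: "inv\<^bsub>K\<lparr>carrier := S\<rparr>\<^esub> x = (THE y. y \<in> S \<and> x \<otimes>\<^bsub>K\<^esub> y = \<one>\<^bsub>K\<^esub> \<and> y \<otimes>\<^bsub>K\<^esub> x = \<one>\<^bsub>K\<^esub>)"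
      by (simp add: m_inv_def)
    show ?thesis unfolding e
    proof (rule the_equality)
      show "inv\<^bsub>K\<^esub> x \<in> S \<and> x \<otimes>\<^bsub>K\<^esub> inv\<^bsub>K\<^esub> x = \<one>\<^bsub>K\<^esub> \<and> inv\<^bsub>K\<^esub> x \<otimes>\<^bsub>K\<^esub> x = \<one>\<^bsub>K\<^esub>"
        using xc ic assms(3) by auto
      show "y = inv\<^bsub>K\<^esub> x" if "y \<in> S \<and> x \<otimes>\<^bsub>K\<^esub> y = \<one>\<^bsub>K\<^esub> \<and> y \<otimes>\<^bsub>K\<^esub> x = \<one>\<^bsub>K\<^esub>" for y
      proof -
        have "y \<in> carrier K" using that assms(4) by auto
        then show ?thesis using that xc K.inv_equality by metis
      qed
    qed
  qed
  show ?thesis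
  proof (rule subgroup.intro)
    show "R \<subseteq> carrier (K\<lparr>carrier := S\<rparr>)" using assms(3) by simp
    show "x \<otimes>\<^bsub>K\<lparr>carrier := S\<rparr>\<^esub> y \<in> R" if "x \<in> R" "y \<in> R" for x y
      using subgroup.m_closed[OF assms(2) that] by simp
    show "\<one>\<^bsub>K\<lparr>carrier := S\<rparr>\<^esub> \<in> R" using subgroup.one_closed[OF assms(2)] by simp
    show "inv\<^bsub>K\<lparr>carrier := S\<rparr>\<^esub> x \<in> R" if "x \<in> R" for x
      using inv[OF that] subgroup.m_inv_closed[OF assms(2) that] by simp
  qed
qed


lemma mk_group_hom: "group A \<Longrightarrow> group B \<Longrightarrow> h \<in> hom A B \<Longrightarrow> group_hom A B h"
  by (simp add: group_hom_def group_hom_axioms_def)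

lemma incl_hom:
  assumes "group A" "subgroup U A" "subgroup V A" "U \<subseteq> V"
  shows "group_hom (A\<lparr>carrier := U\<rparr>) (A\<lparr>carrier := V\<rparr>) id"
proof (rule mk_group_hom)
  show "group (A\<lparr>carrier := U\<rparr>)" using subgroup.subgroup_is_group[OF assms(2,1)] .
  show "group (A\<lparr>carrier := V\<rparr>)" using subgroup.subgroup_is_group[OF assms(3,1)] .
  show "id \<in> hom (A\<lparr>carrier := U\<rparr>) (A\<lparr>carrier := V\<rparr>)"
    using assms(4) unfolding hom_def by auto
qed

lemma incl_hom2:
  assumes "group A" "subgroup U A"
  shows "group_hom (A\<lparr>carrier := U\<rparr>) A id"
proof (rule mk_group_hom)
  show "group (A\<lparr>carrier := U\<rparr>)" using subgroup.subgroup_is_group[OF assms(2,1)] .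
  show "group A" by fact
  show "id \<in> hom (A\<lparr>carrier := U\<rparr>) A"
    using subgroup.subset[OF assms(2)] unfolding hom_def by auto
qed

lemma solvable_sub:
  assumes "group A" "subgroup U A" "solvable A"
  shows "solvable (A\<lparr>carrier := U\<rparr>)"
  using group_hom.inj_hom_imp_solvable[OF incl_hom2[OF assms(1,2)] _ assms(3)] by simp

lemma solvable_sub2:
  assumes "group A" "subgroup U A" "subgroup V A" "U \<subseteq> V" "solvable (A\<lparr>carrier := V\<rparr>)"
  shows "solvable (A\<lparr>carrier := U\<rparr>)"
  using group_hom.inj_hom_imp_solvable[OF incl_hom[OF assms(1-4)] _ assms(5)] by simp



lemma (in group) inv_cancel_l: "x \<in> carrier G \<Longrightarrow> y \<in> carrier G \<Longrightarrow> inv x \<otimes> (x \<otimes> y) = y"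
  by (simp add: m_assoc[symmetric])

lemma (in group) cancel_inv_l: "x \<in> carrier G \<Longrightarrow> y \<in> carrier G \<Longrightarrow> x \<otimes> (inv x \<otimes> y) = y"
  by (simp add: m_assoc[symmetric])

theorem proposition3p3:
  fixes G :: "('g, 'x) monoid_scheme" and N :: "('n, 'y) monoid_scheme"
    and f :: "'g \<Rightarrow> ('n \<Rightarrow> 'n)" and g :: "'g \<Rightarrow> 'n" and M :: "'n set" and H :: "'g set"
  assumes "group G" and "group N"
    and "finite (carrier G)" and "finite (carrier N)"
    and "card (carrier G) = card (carrier N)"
    and "f \<in> hom G (AutoGroup N)"
    and "bij_betw g (carrier G) (carrier N)"
    and "\<And>\<sigma> \<tau>. \<sigma> \<in> carrier G \<Longrightarrow> \<tau> \<in> carrier G \<Longrightarrow>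
           g (\<sigma> \<otimes>\<^bsub>G\<^esub> \<tau>) = g \<sigma> \<otimes>\<^bsub>N\<^esub> f \<sigma> (g \<tau>)"
    and "characteristic M N"
    and "H = {\<sigma> \<in> carrier G. g \<sigma> \<in> M}"
  shows "subgroup H G \<and> E' (G\<lparr>carrier := H\<rparr>) (N\<lparr>carrier := M\<rparr>) \<noteq> {}
    \<and> ((solvable (N Mod M)
         \<and> \<not> solvable (G\<lparr>carrier := kernel G (AutoGroup (N Mod M)) (\<lambda>\<sigma>. theta N M (f \<sigma>))\<rparr>))
        \<longrightarrow> \<not> solvable (G\<lparr>carrier := H\<rparr>))"
proof -
  interpret G: group G by fact
  interpret N: group N by fact
  note gmul = assms(8)
  have fA: "f s \<in> auto N" if "s \<in> carrier G" for s
    using assms(6) that unfolding hom_def AutoGroup_def by auto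
  have fhom: "f s \<in> hom N N" if "s \<in> carrier G" for s
    using fA[OF that] unfolding auto_def by auto
  have fBij: "f s \<in> Bij (carrier N)" if "s \<in> carrier G" for s
    using fA[OF that] unfolding auto_def by auto
  have fmul: "f s (x \<otimes>\<^bsub>N\<^esub> y) = f s x \<otimes>\<^bsub>N\<^esub> f s y"
    if "s \<in> carrier G" "x \<in> carrier N" "y \<in> carrier N" for s x y
    using hom_mult[OF fhom[OF that(1)] that(2,3)] .
  have fcar: "f s x \<in> carrier N" if "s \<in> carrier G" "x \<in> carrier N" for s x
    using hom_in_carrier[OF fhom[OF that(1)] that(2)] .
  have finj: "inj_on (f s) (carrier N)" if "s \<in> carrier G" for s
    using fBij[OF that] unfolding Bij_def bij_betw_def by auto
  have fcomp: "f (s \<otimes>\<^bsub>G\<^esub> t) x = f s (f t x)"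
    if "s \<in> carrier G" "t \<in> carrier G" "x \<in> carrier N" for s t x
  proof -
    have "f (s \<otimes>\<^bsub>G\<^esub> t) = f s \<otimes>\<^bsub>AutoGroup N\<^esub> f t"
      using hom_mult[OF assms(6) that(1,2)] .
    also have "\<dots> = compose (carrier N) (f s) (f t)"
      using fBij[OF that(1)] fBij[OF that(2)] by (simp add: AutoGroup_def BijGroup_def)
    finally show ?thesis using that(3) by (simp add: compose_def)
  qed
  have fone: "f \<one>\<^bsub>G\<^esub> x = x" if "x \<in> carrier N" for x
  proof -
    have "f \<one>\<^bsub>G\<^esub> (f \<one>\<^bsub>G\<^esub> x) = f \<one>\<^bsub>G\<^esub> x"
      using fcomp[of "\<one>\<^bsub>G\<^esub>" "\<one>\<^bsub>G\<^esub>" x] that by simp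
    then show ?thesis
      using inj_onD[OF finj[of "\<one>\<^bsub>G\<^esub>"]] that fcar[of "\<one>\<^bsub>G\<^esub>" x] by simp
  qed
  have fN1: "f s \<one>\<^bsub>N\<^esub> = \<one>\<^bsub>N\<^esub>" if "s \<in> carrier G" for s
  proof -
    have "group_hom N N (f s)" using mk_group_hom[OF assms(2) assms(2) fhom[OF that]] .
    then show ?thesis using group_hom.hom_one by blast
  qed
  have gcar: "g s \<in> carrier N" if "s \<in> carrier G" for s
    using bij_betw_apply[OF assms(7) that] .
  have ginj: "inj_on g (carrier G)" using assms(7) unfolding bij_betw_def by auto
  have g1: "g \<one>\<^bsub>G\<^esub> = \<one>\<^bsub>N\<^esub>"
  proof -
    have "g \<one>\<^bsub>G\<^esub> \<otimes>\<^bsub>N\<^esub> g \<one>\<^bsub>G\<^esub> = g \<one>\<^bsub>G\<^esub> \<otimes>\<^bsub>N\<^esub> \<one>\<^bsub>N\<^esub>"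
      using gmul[of "\<one>\<^bsub>G\<^esub>" "\<one>\<^bsub>G\<^esub>"] fone[OF gcar[of "\<one>\<^bsub>G\<^esub>"]] gcar[of "\<one>\<^bsub>G\<^esub>"] by simp
    then show ?thesis using gcar[of "\<one>\<^bsub>G\<^esub>"] N.l_cancel by simp
  qed
  have Msub: "subgroup M N" using assms(9) unfolding characteristic_def by auto
  have MC: "M \<subseteq> carrier N" using subgroup.subset[OF Msub] .
  have Mfin: "finite M" using finite_subset[OF MC assms(4)] .
  have autM: "\<phi> ` M = M" if "\<phi> \<in> auto N" for \<phi>
    using assms(9) that unfolding characteristic_def by auto
  have fMin: "f s x \<in> M" if "s \<in> carrier G" "x \<in> M" for s x
    using autM[OF fA[OF that(1)]] that(2) by auto
  have fMout: "x \<in> M" if a: "s \<in> carrier G" "x \<in> carrier N" "f s x \<in> M" for s x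
  proof -
    obtain m where m: "m \<in> M" "f s x = f s m" using autM[OF fA[OF a(1)]] a(3) by force
    then have "x = m" using inj_onD[OF finj[OF a(1)]] a(2) MC by auto
    then show ?thesis using m by simp
  qed
  have Mnormal: "M \<lhd> N"
  proof -
    have "x \<otimes>\<^bsub>N\<^esub> h \<otimes>\<^bsub>N\<^esub> inv\<^bsub>N\<^esub> x \<in> M" if x: "x \<in> carrier N" and h: "h \<in> M" for x h
    proof -
      define c where "c = (\<lambda>y\<in>carrier N. x \<otimes>\<^bsub>N\<^esub> y \<otimes>\<^bsub>N\<^esub> inv\<^bsub>N\<^esub> x)"
      have cc: "c y \<in> carrier N" if "y \<in> carrier N" for y
        using that x by (simp add: c_def)
      have chom: "c \<in> hom N N"
      proof (rule homI)
        show "c y \<in> carrier N" if "y \<in> carrier N" for y using cc[OF that] .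
        show "c (y \<otimes>\<^bsub>N\<^esub> z) = c y \<otimes>\<^bsub>N\<^esub> c z" if "y \<in> carrier N" "z \<in> carrier N" for y z
          using that x by (simp add: c_def N.m_assoc N.inv_cancel_l)
      qed
      have cinj: "inj_on c (carrier N)"
      proof (rule inj_onI)
        fix y z assume yz: "y \<in> carrier N" "z \<in> carrier N" "c y = c z"
        then have "x \<otimes>\<^bsub>N\<^esub> y \<otimes>\<^bsub>N\<^esub> inv\<^bsub>N\<^esub> x = x \<otimes>\<^bsub>N\<^esub> z \<otimes>\<^bsub>N\<^esub> inv\<^bsub>N\<^esub> x"
          by (simp add: c_def)
        then show "y = z" using yz x by simp
      qed
      have cBij: "c \<in> Bij (carrier N)"
        unfolding Bij_def using fin_inj_bij[OF assms(4) _ cinj] cc by (auto simp: c_def)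
      have "c ` M = M" using autM chom cBij by (simp add: auto_def)
      then have "c h \<in> M" using h by blast
      then show ?thesis using h MC by (auto simp: c_def)
    qed
    then show ?thesis using N.normal_inv_iff Msub by blast
  qed
  have Hsub: "subgroup H G"
  proof (rule G.subgroupI)
    show "H \<subseteq> carrier G" using assms(10) by auto
    have "\<one>\<^bsub>G\<^esub> \<in> H" using assms(10) g1 subgroup.one_closed[OF Msub] by simp
    then show "H \<noteq> {}" by blast
    show "a \<otimes>\<^bsub>G\<^esub> b \<in> H" if "a \<in> H" "b \<in> H" for a b
    proof -
      have a: "a \<in> carrier G" "g a \<in> M" and b: "b \<in> carrier G" "g b \<in> M" using that assms(10) by auto
      have "g (a \<otimes>\<^bsub>G\<^esub> b) \<in> M"
        using gmul[OF a(1) b(1)] subgroup.m_closed[OF Msub a(2) fMin[OF a(1) b(2)]] by simp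
      then show ?thesis using a b assms(10) by simp
    qed
    show "inv\<^bsub>G\<^esub> a \<in> H" if "a \<in> H" for a
    proof -
      have a: "a \<in> carrier G" "g a \<in> M" using that assms(10) by auto
      have ia: "inv\<^bsub>G\<^esub> a \<in> carrier G" using a by simp
      have "g a \<otimes>\<^bsub>N\<^esub> f a (g (inv\<^bsub>G\<^esub> a)) = \<one>\<^bsub>N\<^esub>"
        using gmul[OF a(1) ia] g1 a by simp
      then have "f a (g (inv\<^bsub>G\<^esub> a)) = inv\<^bsub>N\<^esub> (g a)"
        using N.inv_cancel_l[OF gcar[OF a(1)] fcar[OF a(1) gcar[OF ia]]] gcar[OF a(1)] by simp
      then have "f a (g (inv\<^bsub>G\<^esub> a)) \<in> M" using subgroup.m_inv_closed[OF Msub a(2)] by simp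
      then have "g (inv\<^bsub>G\<^esub> a) \<in> M" using fMout[OF a(1) gcar[OF ia]] by simp
      then show ?thesis using ia assms(10) by simp
    qed
  qed
  have part2: "E' (G\<lparr>carrier := H\<rparr>) (N\<lparr>carrier := M\<rparr>) \<noteq> {}"
  proof -
    define Ms where "Ms = N\<lparr>carrier := M\<rparr>"
    have cMs[simp]: "carrier Ms = M" "monoid.mult Ms = monoid.mult N" "one Ms = one N" by (simp_all add: Ms_def)
    have iMs: "inv\<^bsub>Ms\<^esub> x = inv\<^bsub>N\<^esub> x" if "x \<in> M" for x
      using N.m_inv_consistent[OF Msub that] by (simp add: Ms_def)
    define Hg where "Hg = G\<lparr>carrier := H\<rparr>"
    have grHg: "group Hg" unfolding Hg_def using subgroup.subgroup_is_group[OF Hsub assms(1)] .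
    have Hmem: "s \<in> carrier G" "g s \<in> M" if "s \<in> H" for s using that assms(10) by auto
    have M1: "\<one>\<^bsub>N\<^esub> \<in> M" using subgroup.one_closed[OF Msub] .
    have Mm: "x \<otimes>\<^bsub>N\<^esub> y \<in> M" if "x \<in> M" "y \<in> M" for x y using subgroup.m_closed[OF Msub that] .
    have Mi: "inv\<^bsub>N\<^esub> x \<in> M" if "x \<in> M" for x using subgroup.m_inv_closed[OF Msub that] .
    have MCx: "x \<in> carrier N" if "x \<in> M" for x using that MC by auto
    define Phi where "Phi s = (\<lambda>x\<in>M. g s \<otimes>\<^bsub>N\<^esub> f s x)" for s
    have Phi_app: "Phi s x = g s \<otimes>\<^bsub>N\<^esub> f s x" if "x \<in> M" for s x
      using that by (simp add: Phi_def)
    have PhiM: "Phi s x \<in> M" if "s \<in> H" "x \<in> M" for s x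
      using Phi_app[OF that(2)] Mm[OF Hmem(2)[OF that(1)] fMin[OF Hmem(1)[OF that(1)] that(2)]] by simp
    have PhiBij: "Phi s \<in> Bij M" if s: "s \<in> H" for s
    proof -
      have "inj_on (Phi s) M"
      proof (rule inj_onI)
        fix x y assume xy: "x \<in> M" "y \<in> M" "Phi s x = Phi s y"
        then have "f s x = f s y"
          using Phi_app[of x s] Phi_app[of y s] gcar[OF Hmem(1)[OF s]] fcar[OF Hmem(1)[OF s] MCx[OF xy(1)]]
            fcar[OF Hmem(1)[OF s] MCx[OF xy(2)]] by simp
        then show "x = y" using inj_onD[OF finj[OF Hmem(1)[OF s]]] MCx xy by blast
      qed
      moreover have "Phi s \<in> M \<rightarrow> M" using PhiM[OF s] by blast
      ultimately have "bij_betw (Phi s) M M" using fin_inj_bij[OF Mfin] by blast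
      moreover have "Phi s \<in> extensional M" by (simp add: Phi_def)
      ultimately show ?thesis by (simp add: Bij_def)
    qed
    have Phimul: "Phi (s \<otimes>\<^bsub>G\<^esub> t) = compose M (Phi s) (Phi t)" if st: "s \<in> H" "t \<in> H" for s t
    proof
      fix x
      show "Phi (s \<otimes>\<^bsub>G\<^esub> t) x = compose M (Phi s) (Phi t) x"
      proof (cases "x \<in> M")
        case True
        have s: "s \<in> carrier G" and t: "t \<in> carrier G" using Hmem st by auto
        have x: "x \<in> carrier N" using MCx[OF True] .
        have "Phi (s \<otimes>\<^bsub>G\<^esub> t) x = g s \<otimes>\<^bsub>N\<^esub> f s (g t) \<otimes>\<^bsub>N\<^esub> f s (f t x)"
          using Phi_app[OF True] gmul[OF s t] fcomp[OF s t x] by simp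
        also have "\<dots> = g s \<otimes>\<^bsub>N\<^esub> f s (g t \<otimes>\<^bsub>N\<^esub> f t x)"
          using fmul[OF s gcar[OF t] fcar[OF t x]] N.m_assoc gcar[OF s] fcar[OF s gcar[OF t]] fcar[OF s fcar[OF t x]]
          by simp
        also have "\<dots> = compose M (Phi s) (Phi t) x"
          using True Phi_app PhiM[OF st(2) True] by (simp add: compose_def)
        finally show ?thesis .
      next
        case False
        then show ?thesis by (simp add: Phi_def compose_def)
      qed
    qed
    have Phihom: "Phi \<in> hom Hg (BijGroup M)"
    proof (rule homI)
      show "Phi s \<in> carrier (BijGroup M)" if "s \<in> carrier Hg" for s
        using PhiBij that by (simp add: Hg_def BijGroup_def)
      show "Phi (s \<otimes>\<^bsub>Hg\<^esub> t) = Phi s \<otimes>\<^bsub>BijGroup M\<^esub> Phi t" if "s \<in> carrier Hg" "t \<in> carrier Hg" for s t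
        using that Phimul PhiBij by (simp add: Hg_def BijGroup_def)
    qed
    have Phi1: "Phi s \<one>\<^bsub>N\<^esub> = g s" if "s \<in> H" for s
      using Phi_app[OF M1] fN1[OF Hmem(1)[OF that]] gcar[OF Hmem(1)[OF that]] by simp
    have Phiinj: "inj_on Phi H"
    proof (rule inj_onI)
      fix s t assume st: "s \<in> H" "t \<in> H" "Phi s = Phi t"
      then have "g s = g t" using Phi1 by metis
      then show "s = t" using inj_onD[OF ginj] Hmem st by blast
    qed
    have gH: "g ` H = M"
    proof
      show "g ` H \<subseteq> M" using Hmem by blast
      show "M \<subseteq> g ` H"
      proof
        fix m assume m: "m \<in> M"
        then obtain s where "s \<in> carrier G" "m = g s"
          using assms(7) MCx[OF m] unfolding bij_betw_def by blast
        then show "m \<in> g ` H" using m assms(10) by blast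
      qed
    qed
    define R where "R = Phi ` H"
    have ghom: "group_hom Hg (BijGroup M) Phi"
      using mk_group_hom[OF grHg group_BijGroup Phihom] .
    have Rsub: "subgroup R (BijGroup M)"
      using group_hom.img_is_subgroup[OF ghom] by (simp add: R_def Hg_def)
    have HolBij: "Hol Ms \<subseteq> carrier (BijGroup M)"
    proof
      fix p assume "p \<in> Hol Ms"
      then obtain e a where p: "p = compose M (rho Ms e) a" and e: "e \<in> M" and a: "a \<in> auto Ms"
        unfolding Hol_def by auto
      have rB: "rho Ms e \<in> Bij M"
      proof -
        have rapp: "rho Ms e x = x \<otimes>\<^bsub>N\<^esub> inv\<^bsub>N\<^esub> e" if "x \<in> M" for x
          using that iMs[OF e] by (simp add: rho_def)
        have "inj_on (rho Ms e) M"
        proof (rule inj_onI)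
          fix x y assume xy: "x \<in> M" "y \<in> M" "rho Ms e x = rho Ms e y"
          then show "x = y" using rapp MCx e by simp
        qed
        moreover have "rho Ms e \<in> M \<rightarrow> M" using rapp Mm Mi e by simp
        ultimately have "bij_betw (rho Ms e) M M" using fin_inj_bij[OF Mfin] by blast
        moreover have "rho Ms e \<in> extensional M" by (simp add: rho_def)
        ultimately show ?thesis by (simp add: Bij_def)
      qed
      have aB: "a \<in> Bij M" using a by (simp add: auto_def)
      show "p \<in> carrier (BijGroup M)"
        using compose_Bij[OF rB aB] p by (simp add: BijGroup_def)
    qed
    have RHol: "R \<subseteq> Hol Ms"
    proof
      fix p assume "p \<in> R"
      then obtain s where s: "s \<in> H" and p: "p = Phi s" unfolding R_def by blast
      have sc: "s \<in> carrier G" and gs: "g s \<in> M" using Hmem s by auto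
      have gsc: "g s \<in> carrier N" using MCx[OF gs] .
      define a where "a = (\<lambda>x\<in>M. g s \<otimes>\<^bsub>N\<^esub> f s x \<otimes>\<^bsub>N\<^esub> inv\<^bsub>N\<^esub> g s)"
      have aapp: "a x = g s \<otimes>\<^bsub>N\<^esub> f s x \<otimes>\<^bsub>N\<^esub> inv\<^bsub>N\<^esub> g s" if "x \<in> M" for x
        using that by (simp add: a_def)
      have aM: "a x \<in> M" if "x \<in> M" for x
        using aapp[OF that] Mm Mi gs fMin[OF sc that] by simp
      have ahom: "a \<in> hom Ms Ms"
      proof (rule homI)
        show "a x \<in> carrier Ms" if "x \<in> carrier Ms" for x using aM that by simp
        show "a (x \<otimes>\<^bsub>Ms\<^esub> y) = a x \<otimes>\<^bsub>Ms\<^esub> a y" if "x \<in> carrier Ms" "y \<in> carrier Ms" for x y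
        proof -
          have xy: "x \<in> M" "y \<in> M" using that by auto
          have "a (x \<otimes>\<^bsub>Ms\<^esub> y) = g s \<otimes>\<^bsub>N\<^esub> (f s x \<otimes>\<^bsub>N\<^esub> f s y) \<otimes>\<^bsub>N\<^esub> inv\<^bsub>N\<^esub> g s"
            using aapp[OF Mm[OF xy]] fmul[OF sc MCx[OF xy(1)] MCx[OF xy(2)]] by simp
          also have "\<dots> = a x \<otimes>\<^bsub>Ms\<^esub> a y"
            using aapp[OF xy(1)] aapp[OF xy(2)] gsc fcar[OF sc MCx[OF xy(1)]] fcar[OF sc MCx[OF xy(2)]]
            by (simp add: N.m_assoc N.inv_cancel_l)
          finally show ?thesis .
        qed
      qed
      have aBij: "a \<in> Bij M"
      proof -
        have "inj_on a M"
        proof (rule inj_onI)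
          fix x y assume xy: "x \<in> M" "y \<in> M" "a x = a y"
          then have "f s x = f s y"
            using aapp[OF xy(1)] aapp[OF xy(2)] gsc fcar[OF sc MCx[OF xy(1)]] fcar[OF sc MCx[OF xy(2)]]
            by simp
          then show "x = y" using inj_onD[OF finj[OF sc]] MCx xy by blast
        qed
        moreover have "a \<in> M \<rightarrow> M" using aM by blast
        ultimately have "bij_betw a M M" using fin_inj_bij[OF Mfin] by blast
        moreover have "a \<in> extensional M" by (simp add: a_def)
        ultimately show ?thesis by (simp add: Bij_def)
      qed
      have aauto: "a \<in> auto Ms" using ahom aBij by (simp add: auto_def)
      have igs: "inv\<^bsub>N\<^esub> g s \<in> M" using Mi[OF gs] .
      have "Phi s = compose (carrier Ms) (rho Ms (inv\<^bsub>N\<^esub> g s)) a"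
      proof
        fix x
        show "Phi s x = compose (carrier Ms) (rho Ms (inv\<^bsub>N\<^esub> g s)) a x"
        proof (cases "x \<in> M")
          case True
          have "compose (carrier Ms) (rho Ms (inv\<^bsub>N\<^esub> g s)) a x = a x \<otimes>\<^bsub>N\<^esub> g s"
            using True aM[OF True] iMs[OF igs] gsc by (simp add: compose_def rho_def)
          also have "\<dots> = Phi s x"
            using aapp[OF True] Phi_app[OF True] gsc fcar[OF sc MCx[OF True]] by (simp add: N.m_assoc)
          finally show ?thesis by simp
        next
          case False
          then show ?thesis by (simp add: Phi_def compose_def)
        qed
      qed
      then show "p \<in> Hol Ms" unfolding Hol_def using p igs aauto by auto
    qed
    have subHol: "subgroup R (HolGroup Ms)"
      using subgroup_in_sup[OF group_BijGroup Rsub RHol HolBij] by (simp add: HolGroup_def)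
    have reg: "bij_betw (\<lambda>p. p \<one>\<^bsub>Ms\<^esub>) R (carrier Ms)"
    proof -
      have "inj_on (\<lambda>p. p \<one>\<^bsub>Ms\<^esub>) R"
      proof (rule inj_onI)
        fix p q assume pq: "p \<in> R" "q \<in> R" "p \<one>\<^bsub>Ms\<^esub> = q \<one>\<^bsub>Ms\<^esub>"
        then obtain s t where st: "s \<in> H" "t \<in> H" "p = Phi s" "q = Phi t" unfolding R_def by blast
        then have "g s = g t" using pq(3) Phi1 by simp
        then have "s = t" using inj_onD[OF ginj] Hmem st by blast
        then show "p = q" using st by simp
      qed
      moreover have "(\<lambda>p. p \<one>\<^bsub>Ms\<^esub>) ` R = M"
      proof -
        have "(\<lambda>p. p \<one>\<^bsub>Ms\<^esub>) ` R = (\<lambda>s. Phi s \<one>\<^bsub>N\<^esub>) ` H" unfolding R_def by (simp add: image_image)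
        also have "\<dots> = g ` H" using Phi1 by (simp cong: image_cong)
        finally show ?thesis using gH by simp
      qed
      ultimately show ?thesis by (simp add: bij_betw_def)
    qed
    have iso: "(BijGroup (carrier Ms))\<lparr>carrier := R\<rparr> \<cong> Hg"
    proof -
      have "Phi \<in> iso Hg ((BijGroup M)\<lparr>carrier := R\<rparr>)"
      proof -
        have "Phi \<in> hom Hg ((BijGroup M)\<lparr>carrier := R\<rparr>)"
        proof (rule homI)
          show "Phi s \<in> carrier ((BijGroup M)\<lparr>carrier := R\<rparr>)" if "s \<in> carrier Hg" for s
            using that by (simp add: R_def Hg_def)
          show "Phi (s \<otimes>\<^bsub>Hg\<^esub> t) = Phi s \<otimes>\<^bsub>(BijGroup M)\<lparr>carrier := R\<rparr>\<^esub> Phi t"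
            if "s \<in> carrier Hg" "t \<in> carrier Hg" for s t
            using hom_mult[OF Phihom that] by simp
        qed
        moreover have "bij_betw Phi (carrier Hg) (carrier ((BijGroup M)\<lparr>carrier := R\<rparr>))"
          using Phiinj by (simp add: bij_betw_def R_def Hg_def)
        ultimately show ?thesis by (simp add: iso_def)
      qed
      then have "Hg \<cong> (BijGroup M)\<lparr>carrier := R\<rparr>" by (rule is_isoI)
      then show ?thesis using group.iso_sym[OF grHg] by simp
    qed
    have "R \<in> E' Hg Ms" unfolding E'_def using subHol reg iso by blast
    then show ?thesis unfolding Hg_def Ms_def by blast
  qed
  have part3: "(solvable (N Mod M)
         \<and> \<not> solvable (G\<lparr>carrier := kernel G (AutoGroup (N Mod M)) (\<lambda>\<sigma>. theta N M (f \<sigma>))\<rparr>))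
        \<longrightarrow> \<not> solvable (G\<lparr>carrier := H\<rparr>)"
  proof (rule impI, elim conjE, rule notI)
    assume solQ: "solvable (N Mod M)"
      and nsolK: "\<not> solvable (G\<lparr>carrier := kernel G (AutoGroup (N Mod M)) (\<lambda>\<sigma>. theta N M (f \<sigma>))\<rparr>)"
      and solH: "solvable (G\<lparr>carrier := H\<rparr>)"
    interpret Mn: normal M N by (rule Mnormal)
    define K where "K = {s \<in> carrier G. \<forall>a\<in>carrier N. f s a \<otimes>\<^bsub>N\<^esub> inv\<^bsub>N\<^esub> a \<in> M}"
    have MCx: "x \<in> carrier N" if "x \<in> M" for x using that MC by auto
    have MRr: "x \<in> M #>\<^bsub>N\<^esub> y"
      if "x \<otimes>\<^bsub>N\<^esub> inv\<^bsub>N\<^esub> y \<in> M" "x \<in> carrier N" "y \<in> carrier N" for x y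
    proof -
      have "x = (x \<otimes>\<^bsub>N\<^esub> inv\<^bsub>N\<^esub> y) \<otimes>\<^bsub>N\<^esub> y" using that(2,3) by (simp add: N.m_assoc)
      then show ?thesis using N.rcosI[OF that(1) MC that(3)] by simp
    qed
    have coset_in: "y \<in> carrier N" if "y \<in> M #>\<^bsub>N\<^esub> a" "a \<in> carrier N" for y a
      using N.r_coset_subset_G[OF MC that(2)] that(1) by blast
    have KK: "kernel G (AutoGroup (N Mod M)) (\<lambda>\<sigma>. theta N M (f \<sigma>)) = K"
    proof
      show "kernel G (AutoGroup (N Mod M)) (\<lambda>\<sigma>. theta N M (f \<sigma>)) \<subseteq> K"
      proof
        fix s assume "s \<in> kernel G (AutoGroup (N Mod M)) (\<lambda>\<sigma>. theta N M (f \<sigma>))"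
        then have s: "s \<in> carrier G" and th: "theta N M (f s) = (\<lambda>C\<in>rcosets\<^bsub>N\<^esub> M. C)"
          by (simp_all add: kernel_def AutoGroup_def BijGroup_def FactGroup_def)
        have "f s a \<otimes>\<^bsub>N\<^esub> inv\<^bsub>N\<^esub> a \<in> M" if a: "a \<in> carrier N" for a
        proof -
          have C: "M #>\<^bsub>N\<^esub> a \<in> rcosets\<^bsub>N\<^esub> M" using N.rcosetsI[OF MC a] .
          have "theta N M (f s) (M #>\<^bsub>N\<^esub> a) = M #>\<^bsub>N\<^esub> a" using th C by simp
          then have U: "(\<Union>\<eta>\<in>M #>\<^bsub>N\<^esub> a. f s \<eta> <#\<^bsub>N\<^esub> M) = M #>\<^bsub>N\<^esub> a"
            using C by (simp add: theta_def FactGroup_def)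
          have "a \<in> M #>\<^bsub>N\<^esub> a" using N.rcos_self[OF a Msub] .
          moreover have "f s a \<in> f s a <#\<^bsub>N\<^esub> M"
            using subgroup.one_closed[OF Msub] fcar[OF s a] unfolding l_coset_def by force
          ultimately have "f s a \<in> M #>\<^bsub>N\<^esub> a" using U by blast
          then show ?thesis using subgroup.rcos_module_imp[OF Msub assms(2) a] by blast
        qed
        then show "s \<in> K" using s by (simp add: K_def)
      qed
      show "K \<subseteq> kernel G (AutoGroup (N Mod M)) (\<lambda>\<sigma>. theta N M (f \<sigma>))"
      proof
        fix s assume sK: "s \<in> K"
        then have s: "s \<in> carrier G" and sk: "\<And>a. a \<in> carrier N \<Longrightarrow> f s a \<otimes>\<^bsub>N\<^esub> inv\<^bsub>N\<^esub> a \<in> M"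
          by (auto simp: K_def)
        have "theta N M (f s) = (\<lambda>C\<in>rcosets\<^bsub>N\<^esub> M. C)"
        proof
          fix C
          show "theta N M (f s) C = (\<lambda>C\<in>rcosets\<^bsub>N\<^esub> M. C) C"
          proof (cases "C \<in> rcosets\<^bsub>N\<^esub> M")
            case True
            then obtain a where a: "a \<in> carrier N" and Ca: "C = M #>\<^bsub>N\<^esub> a"
              unfolding RCOSETS_def by auto
            have eq: "f s e <#\<^bsub>N\<^esub> M = M #>\<^bsub>N\<^esub> a" if e: "e \<in> M #>\<^bsub>N\<^esub> a" for e
            proof -
              have ec: "e \<in> carrier N" using coset_in[OF e a] .
              have 1: "M #>\<^bsub>N\<^esub> a = M #>\<^bsub>N\<^esub> e" using N.repr_independence[OF e a Msub] .
              have "f s e \<in> M #>\<^bsub>N\<^esub> e" using MRr[OF sk[OF ec] fcar[OF s ec] ec] .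
              then have 2: "M #>\<^bsub>N\<^esub> e = M #>\<^bsub>N\<^esub> f s e" using N.repr_independence[OF _ ec Msub] by blast
              have 3: "M #>\<^bsub>N\<^esub> f s e = f s e <#\<^bsub>N\<^esub> M" using Mn.coset_eq fcar[OF s ec] by blast
              show ?thesis using 1 2 3 by simp
            qed
            have ne: "a \<in> M #>\<^bsub>N\<^esub> a" using N.rcos_self[OF a Msub] .
            have "(\<Union>\<eta>\<in>M #>\<^bsub>N\<^esub> a. f s \<eta> <#\<^bsub>N\<^esub> M) = M #>\<^bsub>N\<^esub> a"
              using eq ne by blast
            then show ?thesis using True Ca by (simp add: theta_def FactGroup_def)
          next
            case False
            then show ?thesis by (simp add: theta_def FactGroup_def)
          qed
        qed
        then show "s \<in> kernel G (AutoGroup (N Mod M)) (\<lambda>\<sigma>. theta N M (f \<sigma>))"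
          using s by (simp add: kernel_def AutoGroup_def BijGroup_def FactGroup_def)
      qed
    qed
    have Ksub: "subgroup K G"
    proof (rule G.subgroupI)
      show "K \<subseteq> carrier G" by (auto simp: K_def)
      have "\<one>\<^bsub>G\<^esub> \<in> K"
        using fone subgroup.one_closed[OF Msub] by (simp add: K_def)
      then show "K \<noteq> {}" by blast
      show "inv\<^bsub>G\<^esub> s \<in> K" if sK: "s \<in> K" for s
      proof -
        have s: "s \<in> carrier G" and sk: "\<And>a. a \<in> carrier N \<Longrightarrow> f s a \<otimes>\<^bsub>N\<^esub> inv\<^bsub>N\<^esub> a \<in> M"
          using sK by (auto simp: K_def)
        have is': "inv\<^bsub>G\<^esub> s \<in> carrier G" using s by simp
        have "f (inv\<^bsub>G\<^esub> s) a \<otimes>\<^bsub>N\<^esub> inv\<^bsub>N\<^esub> a \<in> M" if a: "a \<in> carrier N" for a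
        proof -
          define b where "b = f (inv\<^bsub>G\<^esub> s) a"
          have bc: "b \<in> carrier N" using fcar[OF is' a] by (simp add: b_def)
          have "f s b = f (s \<otimes>\<^bsub>G\<^esub> inv\<^bsub>G\<^esub> s) a" using fcomp[OF s is' a] by (simp add: b_def)
          also have "\<dots> = a" using fone[OF a] s by simp
          finally have "a \<otimes>\<^bsub>N\<^esub> inv\<^bsub>N\<^esub> b \<in> M" using sk[OF bc] by simp
          then have "inv\<^bsub>N\<^esub> (a \<otimes>\<^bsub>N\<^esub> inv\<^bsub>N\<^esub> b) \<in> M" using subgroup.m_inv_closed[OF Msub] by blast
          then show ?thesis using a bc by (simp add: N.inv_mult_group b_def)
        qed
        then show ?thesis using is' by (simp add: K_def)
      qed
      show "s \<otimes>\<^bsub>G\<^esub> t \<in> K" if "s \<in> K" "t \<in> K" for s t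
      proof -
        have s: "s \<in> carrier G" and sk: "\<And>a. a \<in> carrier N \<Longrightarrow> f s a \<otimes>\<^bsub>N\<^esub> inv\<^bsub>N\<^esub> a \<in> M"
          and t: "t \<in> carrier G" and tk: "\<And>a. a \<in> carrier N \<Longrightarrow> f t a \<otimes>\<^bsub>N\<^esub> inv\<^bsub>N\<^esub> a \<in> M"
          using that by (auto simp: K_def)
        have "f (s \<otimes>\<^bsub>G\<^esub> t) a \<otimes>\<^bsub>N\<^esub> inv\<^bsub>N\<^esub> a \<in> M" if a: "a \<in> carrier N" for a
        proof -
          have ia: "inv\<^bsub>N\<^esub> a \<in> carrier N" using a by simp
          have fta: "f t a \<in> carrier N" using fcar[OF t a] .
          have m: "f s (f t a \<otimes>\<^bsub>N\<^esub> inv\<^bsub>N\<^esub> a) \<otimes>\<^bsub>N\<^esub> (f s a \<otimes>\<^bsub>N\<^esub> inv\<^bsub>N\<^esub> a) \<in> M"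
            using subgroup.m_closed[OF Msub fMin[OF s tk[OF a]] sk[OF a]] .
          have "f s (f t a \<otimes>\<^bsub>N\<^esub> inv\<^bsub>N\<^esub> a) \<otimes>\<^bsub>N\<^esub> (f s a \<otimes>\<^bsub>N\<^esub> inv\<^bsub>N\<^esub> a)
              = f s (f t a) \<otimes>\<^bsub>N\<^esub> ((f s (inv\<^bsub>N\<^esub> a) \<otimes>\<^bsub>N\<^esub> f s a) \<otimes>\<^bsub>N\<^esub> inv\<^bsub>N\<^esub> a)"
            using fmul[OF s fta ia] fcar[OF s fta] fcar[OF s ia] fcar[OF s a] ia by (simp add: N.m_assoc)
          also have "\<dots> = f s (f t a) \<otimes>\<^bsub>N\<^esub> inv\<^bsub>N\<^esub> a"
            using fmul[OF s ia a, symmetric] fN1[OF s] a ia by simp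
          also have "\<dots> = f (s \<otimes>\<^bsub>G\<^esub> t) a \<otimes>\<^bsub>N\<^esub> inv\<^bsub>N\<^esub> a" using fcomp[OF s t a] by simp
          finally show ?thesis using m by simp
        qed
        then show ?thesis using s t by (simp add: K_def)
      qed
    qed
    define psi where "psi s = M #>\<^bsub>N\<^esub> g s" for s
    define Kg where "Kg = G\<lparr>carrier := K\<rparr>"
    have grK: "group Kg" unfolding Kg_def using subgroup.subgroup_is_group[OF Ksub assms(1)] .
    have grNM: "group (N Mod M)" using Mn.factorgroup_is_group .
    have KC: "s \<in> carrier G" if "s \<in> K" for s using that by (simp add: K_def)
    have psihom: "psi \<in> hom Kg (N Mod M)"
    proof (rule homI)
      show "psi s \<in> carrier (N Mod M)" if "s \<in> carrier Kg" for s
        using N.rcosetsI[OF MC gcar[OF KC]] that by (simp add: psi_def Kg_def FactGroup_def)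
      show "psi (s \<otimes>\<^bsub>Kg\<^esub> t) = psi s \<otimes>\<^bsub>N Mod M\<^esub> psi t" if st: "s \<in> carrier Kg" "t \<in> carrier Kg" for s t
      proof -
        have sK: "s \<in> K" and tK: "t \<in> K" using st by (simp_all add: Kg_def)
        have s: "s \<in> carrier G" and t: "t \<in> carrier G" using KC sK tK by auto
        have sk: "f s (g t) \<otimes>\<^bsub>N\<^esub> inv\<^bsub>N\<^esub> (g t) \<in> M" using sK gcar[OF t] by (simp add: K_def)
        have "f s (g t) \<in> M #>\<^bsub>N\<^esub> g t" using MRr[OF sk fcar[OF s gcar[OF t]] gcar[OF t]] .
        then have e: "M #>\<^bsub>N\<^esub> g t = M #>\<^bsub>N\<^esub> f s (g t)" using N.repr_independence[OF _ gcar[OF t] Msub] by blast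
        have "psi (s \<otimes>\<^bsub>Kg\<^esub> t) = M #>\<^bsub>N\<^esub> (g s \<otimes>\<^bsub>N\<^esub> f s (g t))"
          using gmul[OF s t] by (simp add: psi_def Kg_def)
        also have "\<dots> = (M #>\<^bsub>N\<^esub> g s) <#>\<^bsub>N\<^esub> (M #>\<^bsub>N\<^esub> f s (g t))"
          using Mn.rcos_sum[OF gcar[OF s] fcar[OF s gcar[OF t]]] by simp
        also have "\<dots> = psi s \<otimes>\<^bsub>N Mod M\<^esub> psi t" using e by (simp add: psi_def)
        finally show ?thesis .
      qed
    qed
    have gh1: "group_hom Kg (N Mod M) psi" using mk_group_hom[OF grK grNM psihom] .
    have imsub: "subgroup (psi ` K) (N Mod M)"
      using group_hom.img_is_subgroup[OF gh1] by (simp add: Kg_def)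
    define Q where "Q = (N Mod M)\<lparr>carrier := psi ` K\<rparr>"
    have grQ: "group Q" unfolding Q_def using subgroup.subgroup_is_group[OF imsub grNM] .
    have solQ': "solvable Q" unfolding Q_def using solvable_sub[OF grNM imsub solQ] .
    have psihom2: "psi \<in> hom Kg Q"
    proof (rule homI)
      show "psi s \<in> carrier Q" if "s \<in> carrier Kg" for s using that by (simp add: Q_def Kg_def)
      show "psi (s \<otimes>\<^bsub>Kg\<^esub> t) = psi s \<otimes>\<^bsub>Q\<^esub> psi t" if "s \<in> carrier Kg" "t \<in> carrier Kg" for s t
        using hom_mult[OF psihom that] by (simp add: Q_def)
    qed
    have gh2: "group_hom Kg Q psi" using mk_group_hom[OF grK grQ psihom2] .
    have Jsub: "subgroup (H \<inter> K) G" using G.subgroups_Inter_pair[OF Hsub Ksub] .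
    have solJ: "solvable (G\<lparr>carrier := H \<inter> K\<rparr>)"
      using solvable_sub2[OF assms(1) Jsub Hsub _ solH] by blast
    have gh0: "group_hom (G\<lparr>carrier := H \<inter> K\<rparr>) Kg id"
      unfolding Kg_def using incl_hom[OF assms(1) Jsub Ksub] by blast
    have surj: "psi ` carrier Kg = carrier Q" by (simp add: Q_def Kg_def)
    have kern: "kernel Kg Q psi \<subseteq> id ` carrier (G\<lparr>carrier := H \<inter> K\<rparr>)"
    proof
      fix s assume "s \<in> kernel Kg Q psi"
      then have sK: "s \<in> K" and e: "M #>\<^bsub>N\<^esub> g s = M"
        by (simp_all add: kernel_def Kg_def Q_def psi_def)
      have "g s \<in> M" using N.rcos_self[OF gcar[OF KC[OF sK]] Msub] e by simp
      then show "s \<in> id ` carrier (G\<lparr>carrier := H \<inter> K\<rparr>)" using sK KC[OF sK] assms(10) by simp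
    qed
    have "solvable Kg" using solvable_condition[OF gh0 gh2 surj kern solJ solQ'] .
    then show False using nsolK KK by (simp add: Kg_def)
  qed
  show ?thesis using Hsub part2 part3 by blast
qed

end
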